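(* Let $G$ be a matrix with entries from a field $\mathbb{F}$, with row index set $S$ and column index set $T$. Suppose $S=S_1\cup\cdots\cup S_m$ and $T=T_1\cup\cdots\cup T_n$ are partitions into pairwise disjoint sets. Let $s_1,\dots,s_m,t_1,\dots,t_n$ be non-negative integers with $t_j\le |T_j|$ for all $j$. Then there exist subsets $\mathbf{s}_i\subseteq S_i$ with $|\mathbf{s}_i|=s_i$ ($1\le i\le m$) and $\mathbf{t}_j\subseteq T_j$ with $|\mathbf{t}_j|=t_j$ ($1\le j\le n$) such that \[ \operatorname{rank}\Big(G\big(\textstyle\bigcup_{i=1}^m\mathbf{s}_i,\bigcup_{j=1}^n\mathbf{t}_j\big)\Big)=\sum_{i=1}^m s_i, \] if and only if for every $I\subseteq\{1,\dots,m\}$ and every $K\subseteq\{1,\dots,n\}$, \[ \operatorname{rank}\Big(G\big(\textstyle\bigcup_{i\in I}S_i,\bigcup_{k\in K}T_k\big)\Big)\ \ge\ \sum_{i\in I}s_i+\sum_{k\in K}t_k-\sum_{j=1}^n t_j . \]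
   Context: For $\mathbf{s}\subseteq S$ and $\mathbf{t}\subseteq T$, $G(\mathbf{s},\mathbf{t})$ denotes the submatrix of $G$ formed by the rows with indices in $\mathbf{s}$ and the columns with indices in $\mathbf{t}$ (the rank of a submatrix with no rows or no columns is $0$). *)

theory Defs
  imports Complex_Main "HOL-Library.Function_Algebras"
begin

text \<open>A matrix with row index set S and column index set T over a field is
a function G :: 'r \<Rightarrow> 'c \<Rightarrow> 'a.\<close>

definition scale_fun :: "'a::field \<Rightarrow> ('c \<Rightarrow> 'a) \<Rightarrow> ('c \<Rightarrow> 'a)" where
  "scale_fun c f = (\<lambda>j. c * f j)"

lemma vector_space_scale_fun: "vector_space (scale_fun :: 'a::field \<Rightarrow> ('c \<Rightarrow> 'a) \<Rightarrow> _)"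
  by unfold_locales (auto simp: scale_fun_def algebra_simps)

text \<open>Rank of the submatrix G(s,t): dimension of its row space (rows of the
submatrix are the rows i \<in> s restricted to the columns t, extended by zero).
With no rows or no columns this is 0.\<close>

definition submatrix_rank :: "('r \<Rightarrow> 'c \<Rightarrow> 'a::field) \<Rightarrow> 'r set \<Rightarrow> 'c set \<Rightarrow> nat" where
  "submatrix_rank G s t =
     vector_space.dim scale_fun ((\<lambda>i. \<lambda>j. if j \<in> t then G i j else 0) ` s)"

end

theory Submission
  imports Defs
begin


context vector_space begin

lemma dim_subset_fin: "S \<subseteq> T \<Longrightarrow> finite T \<Longrightarrow> dim S \<le> dim T"
proof -
  assume a: "S \<subseteq> T" "finite T"
  obtain B where B: "B \<subseteq> T" "independent B" "T \<subseteq> span B" "card B = dim T" by (rule basis_exists)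
  have "finite B" using B(1) a(2) finite_subset by blast
  then have "dim S \<le> card B" using a(1) B(3) by (intro dim_le_card) auto
  then show ?thesis using B(4) by simp
qed

lemma dim_submod:
  assumes "finite A" "finite B"
  shows "dim (A \<union> B) + dim (A \<inter> B) \<le> dim A + dim B"
proof -
  obtain B0 where B0: "B0 \<subseteq> A \<inter> B" "independent B0" "A \<inter> B \<subseteq> span B0" "card B0 = dim (A \<inter> B)"
    by (rule basis_exists)
  obtain BA where BA: "B0 \<subseteq> BA" "BA \<subseteq> A" "independent BA" "A \<subseteq> span BA"
    using maximal_independent_subset_extend[of B0 A] B0 by auto
  obtain BB where BB: "B0 \<subseteq> BB" "BB \<subseteq> B" "independent BB" "B \<subseteq> span BB"
    using maximal_independent_subset_extend[of B0 B] B0 by auto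
  have cA: "card BA = dim A" using BA basis_card_eq_dim by blast
  have cB: "card BB = dim B" using BB basis_card_eq_dim by blast
  have fA: "finite BA" using BA(2) assms(1) finite_subset by blast
  have fB: "finite BB" using BB(2) assms(2) finite_subset by blast
  have "A \<union> B \<subseteq> span (BA \<union> BB)"
    using BA(4) BB(4) span_mono[of BA "BA \<union> BB"] span_mono[of BB "BA \<union> BB"] by blast
  then have "dim (A \<union> B) \<le> card (BA \<union> BB)" using fA fB by (intro dim_le_card) auto
  moreover have "card (BA \<union> BB) + card (BA \<inter> BB) = card BA + card BB"
    using card_Un_Int[OF fA fB] by simp
  moreover have "card B0 \<le> card (BA \<inter> BB)"
    using BA(1) BB(1) fA by (intro card_mono) auto
  ultimately show ?thesis using cA cB B0(4) by linarith
qed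

end

interpretation vs: vector_space "scale_fun :: 'a::field \<Rightarrow> ('c \<Rightarrow> 'a) \<Rightarrow> ('c \<Rightarrow> 'a)"
  by (rule vector_space_scale_fun)

definition rowv :: "('r \<Rightarrow> 'c \<Rightarrow> 'a::field) \<Rightarrow> 'c set \<Rightarrow> 'r \<Rightarrow> 'c \<Rightarrow> 'a" where
  "rowv G t i = (\<lambda>j. if j \<in> t then G i j else 0)"

definition evec :: "'c \<Rightarrow> 'c \<Rightarrow> 'a::field" where
  "evec j = (\<lambda>k. if k = j then 1 else 0)"

lemma submatrix_rank_rowv: "submatrix_rank G s t = vs.dim (rowv G t ` s)"
  unfolding submatrix_rank_def rowv_def by simp

lemma sum_fun_apply: "finite A \<Longrightarrow> (\<Sum>j\<in>A. f j) k = (\<Sum>j\<in>A. f j k)"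
  by (induction A rule: finite_induct) auto

lemma rowv_decomp:
  assumes "finite T'" "T' \<subseteq> T"
  shows "rowv G T i = rowv G (T - T') i + (\<Sum>j\<in>T'. scale_fun (G i j) (evec j))"
proof (rule ext)
  fix k
  have "(\<Sum>j\<in>T'. scale_fun (G i j) (evec j)) k = (\<Sum>j\<in>T'. if k = j then G i j else 0)"
    using assms(1) by (simp add: sum_fun_apply scale_fun_def evec_def if_distrib cong: if_cong)
  also have "\<dots> = (if k \<in> T' then G i k else 0)" using assms(1) by simp
  finally show "rowv G T i k = (rowv G (T - T') i + (\<Sum>j\<in>T'. scale_fun (G i j) (evec j))) k"
    using assms(2) by (auto simp: rowv_def)
qed

lemma subspace_vanish: "vs.subspace {f :: 'c \<Rightarrow> 'a::field. f x = 0}"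
  unfolding vs.subspace_def by (auto simp: scale_fun_def)

lemma keyD:
  fixes G :: "'r \<Rightarrow> 'c \<Rightarrow> 'a::field"
  assumes "finite T" "T' \<subseteq> T" "finite R"
  shows "vs.dim (rowv G T ` R \<union> evec ` T') = submatrix_rank G R (T - T') + card T'"
proof -
  have fT': "finite T'" using assms finite_subset by blast
  define C where "C = rowv G (T - T') ` R"
  have span1: "vs.span (rowv G T ` R \<union> evec ` T') = vs.span (C \<union> evec ` T')"
  proof (subst vs.span_eq, intro conjI)
    show "rowv G T ` R \<union> evec ` T' \<subseteq> vs.span (C \<union> evec ` T')"
    proof
      fix x assume "x \<in> rowv G T ` R \<union> evec ` T'"
      then show "x \<in> vs.span (C \<union> evec ` T')"
      proof
        assume "x \<in> rowv G T ` R"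
        then obtain i where i: "i \<in> R" "x = rowv G T i" by auto
        have "rowv G (T - T') i \<in> vs.span (C \<union> evec ` T')"
          using i by (intro vs.span_base) (auto simp: C_def)
        moreover have "(\<Sum>j\<in>T'. scale_fun (G i j) (evec j)) \<in> vs.span (C \<union> evec ` T')"
          by (intro vs.span_sum vs.span_scale) (auto intro: vs.span_base)
        ultimately have "rowv G (T - T') i + (\<Sum>j\<in>T'. scale_fun (G i j) (evec j)) \<in> vs.span (C \<union> evec ` T')"
          by (rule vs.span_add)
        moreover have "x = rowv G (T - T') i + (\<Sum>j\<in>T'. scale_fun (G i j) (evec j))"
          using i(2) rowv_decomp[OF fT' assms(2), of G i] by simp
        ultimately show ?thesis by simp
      qed (auto intro: vs.span_base)
    qed
    show "C \<union> evec ` T' \<subseteq> vs.span (rowv G T ` R \<union> evec ` T')"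
    proof
      fix x assume "x \<in> C \<union> evec ` T'"
      then show "x \<in> vs.span (rowv G T ` R \<union> evec ` T')"
      proof
        assume "x \<in> C"
        then obtain i where i: "i \<in> R" "x = rowv G (T - T') i" by (auto simp: C_def)
        have "rowv G T i \<in> vs.span (rowv G T ` R \<union> evec ` T')"
          using i by (intro vs.span_base) auto
        moreover have "(\<Sum>j\<in>T'. scale_fun (G i j) (evec j)) \<in> vs.span (rowv G T ` R \<union> evec ` T')"
          by (intro vs.span_sum vs.span_scale) (auto intro: vs.span_base)
        moreover have "x = rowv G T i - (\<Sum>j\<in>T'. scale_fun (G i j) (evec j))"
          using i rowv_decomp[OF fT' assms(2), of G i] by simp
        ultimately show ?thesis using vs.span_diff by simp
      qed (auto intro: vs.span_base)
    qed
  qed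
  obtain BR where BR: "BR \<subseteq> C" "vs.independent BR" "C \<subseteq> vs.span BR" "card BR = vs.dim C"
    by (rule vs.basis_exists)
  have fC: "finite C" using assms(3) by (simp add: C_def)
  have fBR: "finite BR" using BR(1) fC finite_subset by blast
  have van: "\<And>f j. f \<in> BR \<Longrightarrow> j \<in> T' \<Longrightarrow> f j = 0"
    using BR(1) by (auto simp: C_def rowv_def)
  have ind: "U \<subseteq> T' \<Longrightarrow> vs.independent (BR \<union> evec ` U)" if "finite U" for U
    using that
  proof (induction U rule: finite_induct)
    case empty then show ?case using BR(2) by simp
  next
    case (insert x U)
    have "BR \<union> evec ` U \<subseteq> {f. f x = 0}"
      using insert van by (auto simp: evec_def)
    then have "vs.span (BR \<union> evec ` U) \<subseteq> {f. f x = 0}"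
      by (intro vs.span_minimal subspace_vanish)
    moreover have "evec x x \<noteq> (0::'a)" by (simp add: evec_def)
    ultimately have "evec x \<notin> vs.span (BR \<union> evec ` U)" by auto
    then have "vs.independent (insert (evec x) (BR \<union> evec ` U))"
      using insert by (intro vs.independent_insertI) auto
    then show ?case by simp
  qed
  have indT: "vs.independent (BR \<union> evec ` T')" using ind[OF fT'] by simp
  have span2: "vs.span (BR \<union> evec ` T') = vs.span (C \<union> evec ` T')"
    using BR(1) BR(3) vs.span_mono[of BR "BR \<union> evec ` T'"]
    by (subst vs.span_eq) (auto intro: vs.span_base)
  have "vs.dim (rowv G T ` R \<union> evec ` T') = card (BR \<union> evec ` T')"
    using vs.dim_eq_card[OF _ indT] span1 span2 by simp
  also have "\<dots> = card BR + card (evec ` T' :: ('c \<Rightarrow> 'a) set)"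
  proof (rule card_Un_disjoint[OF fBR])
    show "finite (evec ` T' :: ('c \<Rightarrow> 'a) set)" using fT' by simp
    show "BR \<inter> evec ` T' = {}"
    proof (rule ccontr)
      assume "BR \<inter> evec ` T' \<noteq> {}"
      then obtain j where "j \<in> T'" "evec j \<in> BR" by auto
      then have "(evec j :: 'c \<Rightarrow> 'a) j = 0" using van by blast
      then show False by (simp add: evec_def)
    qed
  qed
  also have "card (evec ` T' :: ('c \<Rightarrow> 'a) set) = card T'"
  proof (rule card_image, rule inj_onI)
    fix x y assume "(evec x :: 'c \<Rightarrow> 'a) = evec y"
    then have "(evec x :: 'c \<Rightarrow> 'a) x = evec y x" by simp
    then show "x = y" by (simp add: evec_def split: if_splits)
  qed
  finally show ?thesis using BR(4) by (simp add: submatrix_rank_rowv C_def)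
qed



locale rankf =
  fixes r :: "'e set \<Rightarrow> nat"
  assumes r_card: "finite X \<Longrightarrow> r X \<le> card X"
    and r_mono: "X \<subseteq> Y \<Longrightarrow> finite Y \<Longrightarrow> r X \<le> r Y"
    and r_sub: "finite X \<Longrightarrow> finite Y \<Longrightarrow> r (X \<union> Y) + r (X \<inter> Y) \<le> r X + r Y"
begin

lemma indep_subset:
  assumes "finite X" "r X = card X" "Y \<subseteq> X"
  shows "r Y = card Y"
proof -
  have fY: "finite Y" using assms finite_subset by blast
  have h: "r (Y \<union> (X - Y)) \<le> r Y + r (X - Y)"
    using r_sub[OF fY, of "X - Y"] assms(1) by simp
  have "Y \<union> (X - Y) = X" using assms(3) by blast
  with h have "r X \<le> r Y + r (X - Y)" by simp
  moreover have "Y \<union> (X - Y) = X" using assms(3) by blast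
  moreover have "r (X - Y) \<le> card (X - Y)" using r_card assms(1) by simp
  moreover have "card X = card Y + card (X - Y)"
    using card_Un_disjoint[OF fY, of "X - Y"] assms(1) \<open>Y \<union> (X - Y) = X\<close> by fastforce
  ultimately have "card Y \<le> r Y" using assms(2) by linarith
  then show ?thesis using r_card[OF fY] by simp
qed

lemma rado_step:
  assumes fJ0: "finite J0" and fin: "\<forall>j\<in>J0. finite (A j)"
    and cond: "\<forall>J\<subseteq>J0. card J \<le> r (\<Union>(A ` J))"
    and j0: "j0 \<in> J0" and x: "x1 \<in> A j0" "x2 \<in> A j0" "x1 \<noteq> x2"
    and J1: "J1 \<subseteq> J0" "r (\<Union>((A(j0 := A j0 - {x1})) ` J1)) < card J1"
    and J2: "J2 \<subseteq> J0" "r (\<Union>((A(j0 := A j0 - {x2})) ` J2)) < card J2"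
  shows False
proof -
  define Y1 where "Y1 = \<Union>((A(j0 := A j0 - {x1})) ` J1)"
  define Y2 where "Y2 = \<Union>((A(j0 := A j0 - {x2})) ` J2)"
  have j1: "j0 \<in> J1"
  proof (rule ccontr)
    assume "j0 \<notin> J1"
    then have "(A(j0 := A j0 - {x1})) ` J1 = A ` J1" by auto
    then show False using J1(2) cond[rule_format, OF J1(1)] by simp
  qed
  have j2: "j0 \<in> J2"
  proof (rule ccontr)
    assume "j0 \<notin> J2"
    then have "(A(j0 := A j0 - {x2})) ` J2 = A ` J2" by auto
    then show False using J2(2) cond[rule_format, OF J2(1)] by simp
  qed
  have fJ1: "finite J1" "finite J2" using J1 J2 fJ0 finite_subset by blast+
  have fY: "finite Y1" "finite Y2" unfolding Y1_def Y2_def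
    using fJ1 J1(1) J2(1) fin by auto
  have U: "\<Union>(A ` (J1 \<union> J2)) \<subseteq> Y1 \<union> Y2"
  proof
    fix y assume "y \<in> \<Union>(A ` (J1 \<union> J2))"
    then obtain j where j: "j \<in> J1 \<union> J2" "y \<in> A j" by auto
    show "y \<in> Y1 \<union> Y2"
    proof (cases "j = j0")
      case True
      then show ?thesis using j j1 j2 x unfolding Y1_def Y2_def
        by (cases "y = x1") (auto intro!: bexI[of _ j0])
    next
      case False
      then show ?thesis using j unfolding Y1_def Y2_def by (auto intro!: bexI[of _ j])
    qed
  qed
  have I: "\<Union>(A ` (J1 \<inter> J2 - {j0})) \<subseteq> Y1 \<inter> Y2"
    unfolding Y1_def Y2_def by fastforce
  have fUY: "finite (Y1 \<union> Y2)" "finite (Y1 \<inter> Y2)" using fY by auto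
  have c1: "card (J1 \<union> J2) \<le> r (\<Union>(A ` (J1 \<union> J2)))"
    using cond[rule_format, of "J1 \<union> J2"] J1(1) J2(1) by simp
  have c2: "card (J1 \<inter> J2 - {j0}) \<le> r (\<Union>(A ` (J1 \<inter> J2 - {j0})))"
    using cond[rule_format, of "J1 \<inter> J2 - {j0}"] J1(1) by blast
  have "card (J1 \<union> J2) \<le> r (Y1 \<union> Y2)"
    using c1 r_mono[OF U fUY(1)] by linarith
  moreover have "card (J1 \<inter> J2 - {j0}) \<le> r (Y1 \<inter> Y2)"
    using c2 r_mono[OF I fUY(2)] by linarith
  moreover have "card (J1 \<inter> J2 - {j0}) = card (J1 \<inter> J2) - 1" using j1 j2 by simp
  moreover have "card (J1 \<inter> J2) \<ge> 1" using j1 j2 fJ1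
    by (metis IntI One_nat_def Suc_leI card_gt_0_iff empty_iff finite_Int)
  moreover have "card (J1 \<union> J2) + card (J1 \<inter> J2) = card J1 + card J2"
    using card_Un_Int[OF fJ1] by simp
  moreover have "r (Y1 \<union> Y2) + r (Y1 \<inter> Y2) \<le> r Y1 + r Y2" using r_sub fY by simp
  ultimately show False using J1(2) J2(2) unfolding Y1_def[symmetric] Y2_def[symmetric] by linarith
qed

lemma rado:
  assumes "finite J0" "\<forall>j\<in>J0. finite (A j)" "\<forall>J\<subseteq>J0. card J \<le> r (\<Union>(A ` J))"
  shows "\<exists>f. (\<forall>j\<in>J0. f j \<in> A j) \<and> inj_on f J0 \<and> r (f ` J0) = card J0"
proof -
  have main: "\<forall>A. (\<Sum>j\<in>J0. card (A j)) = N \<longrightarrow> (\<forall>j\<in>J0. finite (A j))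
     \<longrightarrow> (\<forall>J\<subseteq>J0. card J \<le> r (\<Union>(A ` J)))
     \<longrightarrow> (\<exists>f. (\<forall>j\<in>J0. f j \<in> A j) \<and> inj_on f J0 \<and> r (f ` J0) = card J0)" for N
  proof (induction N rule: less_induct)
    case (less N)
    show ?case
    proof (intro allI impI)
      fix A :: "_ \<Rightarrow> 'e set"
      assume hN: "(\<Sum>j\<in>J0. card (A j)) = N" and fin: "\<forall>j\<in>J0. finite (A j)"
        and cond: "\<forall>J\<subseteq>J0. card J \<le> r (\<Union>(A ` J))"
      show "\<exists>f. (\<forall>j\<in>J0. f j \<in> A j) \<and> inj_on f J0 \<and> r (f ` J0) = card J0"
      proof (cases "\<exists>j\<in>J0. 2 \<le> card (A j)")
        case False
        define f where "f j = (SOME x. x \<in> A j)" for j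
        have single: "A j = {f j}" if "j \<in> J0" for j
        proof -
          have "1 \<le> r (A j)" using cond[rule_format, of "{j}"] that by simp
          also have "\<dots> \<le> card (A j)" using r_card fin that by simp
          finally have "card (A j) = 1" using False that by force
          then obtain a where "A j = {a}" using card_1_singletonE by blast
          then show ?thesis by (simp add: f_def)
        qed
        then have U: "\<Union>(A ` J0) = f ` J0" by auto
        have a: "card J0 \<le> r (f ` J0)" using cond U by (metis order_refl)
        have b: "r (f ` J0) \<le> card (f ` J0)" using r_card assms(1) by simp
        have c: "card (f ` J0) \<le> card J0" by (rule card_image_le[OF assms(1)])
        have eq: "r (f ` J0) = card J0" "card (f ` J0) = card J0"
          using a b c by linarith+
        have "inj_on f J0" using eq_card_imp_inj_on[OF assms(1) eq(2)] .
        then show ?thesis using eq single by blast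
      next
        case True
        then obtain j0 where j0: "j0 \<in> J0" "2 \<le> card (A j0)" by auto
        obtain x1 where x1: "x1 \<in> A j0" using j0 by fastforce
        have "card (A j0 - {x1}) \<ge> 1" using j0 x1 fin by simp
        then have "A j0 - {x1} \<noteq> {}" by (metis card.empty not_one_le_zero)
        then obtain x2 where x2: "x2 \<in> A j0 - {x1}" by blast
        have "\<exists>x\<in>A j0. \<forall>J\<subseteq>J0. card J \<le> r (\<Union>((A(j0 := A j0 - {x})) ` J))"
        proof (rule ccontr)
          assume "\<not> ?thesis"
          then have n1: "\<not> (\<forall>J\<subseteq>J0. card J \<le> r (\<Union>((A(j0 := A j0 - {x1})) ` J)))"
            and n2: "\<not> (\<forall>J\<subseteq>J0. card J \<le> r (\<Union>((A(j0 := A j0 - {x2})) ` J)))"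
            using x1 x2 by auto
          obtain J1 where "J1 \<subseteq> J0" "r (\<Union>((A(j0 := A j0 - {x1})) ` J1)) < card J1"
            using n1 by (meson not_le)
          moreover obtain J2 where "J2 \<subseteq> J0" "r (\<Union>((A(j0 := A j0 - {x2})) ` J2)) < card J2"
            using n2 by (meson not_le)
          ultimately show False
            using rado_step[OF assms(1) fin cond j0(1) x1, of x2] x2 by auto
        qed
        then obtain x where x: "x \<in> A j0"
          and cx: "\<forall>J\<subseteq>J0. card J \<le> r (\<Union>((A(j0 := A j0 - {x})) ` J))" by blast
        define A' where "A' = A(j0 := A j0 - {x})"
        have finA': "\<forall>j\<in>J0. finite (A' j)" using fin by (simp add: A'_def)
        have "(\<Sum>j\<in>J0. card (A' j)) = card (A' j0) + (\<Sum>j\<in>J0 - {j0}. card (A' j))"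
          using sum.remove[OF assms(1) j0(1)] by blast
        also have "(\<Sum>j\<in>J0 - {j0}. card (A' j)) = (\<Sum>j\<in>J0 - {j0}. card (A j))"
          by (rule sum.cong) (auto simp: A'_def)
        also have "card (A' j0) < card (A j0)" using x fin j0 by (simp add: A'_def)
        finally have "(\<Sum>j\<in>J0. card (A' j)) < card (A j0) + (\<Sum>j\<in>J0 - {j0}. card (A j))" by simp
        also have "\<dots> = N" using hN sum.remove[OF assms(1) j0(1), of "\<lambda>j. card (A j)"] by simp
        finally have lt: "(\<Sum>j\<in>J0. card (A' j)) < N" .
        have cx': "\<forall>J\<subseteq>J0. card J \<le> r (\<Union>(A' ` J))" using cx by (simp add: A'_def)
        have "\<exists>f. (\<forall>j\<in>J0. f j \<in> A' j) \<and> inj_on f J0 \<and> r (f ` J0) = card J0"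
          using spec[OF less.IH[OF lt], of A'] finA' cx' by blast
        then obtain f where f: "\<forall>j\<in>J0. f j \<in> A' j" "inj_on f J0" "r (f ` J0) = card J0"
          by blast
        have "\<forall>j\<in>J0. f j \<in> A j" using f(1) by (auto simp: A'_def split: if_splits)
        then show ?thesis using f by blast
      qed
    qed
  qed
  have "(\<Sum>j\<in>J0. card (A j)) = (\<Sum>j\<in>J0. card (A j)) \<longrightarrow> (\<forall>j\<in>J0. finite (A j))
     \<longrightarrow> (\<forall>J\<subseteq>J0. card J \<le> r (\<Union>(A ` J)))
     \<longrightarrow> (\<exists>f. (\<forall>j\<in>J0. f j \<in> A j) \<and> inj_on f J0 \<and> r (f ` J0) = card J0)"
    by (rule spec[OF main])
  then show ?thesis using assms(2) assms(3) by blast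
qed

lemma caps_iff:
  assumes fP: "finite P" and fE: "\<forall>p\<in>P. finite (E p)"
    and disj: "\<forall>p\<in>P. \<forall>q\<in>P. p \<noteq> q \<longrightarrow> E p \<inter> E q = {}"
  shows "(\<exists>X. X \<subseteq> \<Union>(E ` P) \<and> (\<forall>p\<in>P. card (X \<inter> E p) = c p) \<and> r X = card X)
     \<longleftrightarrow> (\<forall>Q\<subseteq>P. sum c Q \<le> r (\<Union>(E ` Q)))"
proof
  assume "\<exists>X. X \<subseteq> \<Union>(E ` P) \<and> (\<forall>p\<in>P. card (X \<inter> E p) = c p) \<and> r X = card X"
  then obtain X where X: "X \<subseteq> \<Union>(E ` P)" "\<forall>p\<in>P. card (X \<inter> E p) = c p" "r X = card X" by blast
  have fX: "finite X" using X(1) fP fE finite_subset by blast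
  show "\<forall>Q\<subseteq>P. sum c Q \<le> r (\<Union>(E ` Q))"
  proof (intro allI impI)
    fix Q assume Q: "Q \<subseteq> P"
    have fQ: "finite Q" using Q fP finite_subset by blast
    have eq: "X \<inter> \<Union>(E ` Q) = (\<Union>p\<in>Q. X \<inter> E p)" by blast
    have "card (X \<inter> \<Union>(E ` Q)) = (\<Sum>p\<in>Q. card (X \<inter> E p))"
      unfolding eq using fQ fX Q disj by (intro card_UN_disjoint) auto
    also have "\<dots> = sum c Q" using X(2) Q by (intro sum.cong) auto
    finally have "sum c Q = r (X \<inter> \<Union>(E ` Q))"
      using indep_subset[OF fX X(3), of "X \<inter> \<Union>(E ` Q)"] by simp
    also have "\<dots> \<le> r (\<Union>(E ` Q))" using fQ fE Q by (intro r_mono) auto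
    finally show "sum c Q \<le> r (\<Union>(E ` Q))" .
  qed
next
  assume cond: "\<forall>Q\<subseteq>P. sum c Q \<le> r (\<Union>(E ` Q))"
  define J0 where "J0 = Sigma P (\<lambda>p. {..<c p})"
  define A where "A = E \<circ> (fst :: _ \<times> nat \<Rightarrow> _)"
  have fJ0: "finite J0" using fP by (simp add: J0_def)
  have finA: "\<forall>j\<in>J0. finite (A j)" using fE by (auto simp: J0_def A_def)
  have condA: "\<forall>J\<subseteq>J0. card J \<le> r (\<Union>(A ` J))"
  proof (intro allI impI)
    fix J assume J: "J \<subseteq> J0"
    define Q where "Q = fst ` J"
    have QP: "Q \<subseteq> P" using J by (auto simp: Q_def J0_def)
    have fQ: "finite Q" using QP fP finite_subset by blast
    have "J \<subseteq> Sigma Q (\<lambda>p. {..<c p})" using J by (force simp: Q_def J0_def)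
    then have "card J \<le> card (Sigma Q (\<lambda>p. {..<c p}))" using fQ by (intro card_mono) auto
    also have "\<dots> = sum c Q" using fQ by (simp add: card_SigmaI)
    also have "\<dots> \<le> r (\<Union>(E ` Q))" using cond QP by blast
    also have "\<Union>(E ` Q) = \<Union>(A ` J)" by (simp add: Q_def A_def image_comp)
    finally show "card J \<le> r (\<Union>(A ` J))" .
  qed
  obtain f where f: "\<forall>j\<in>J0. f j \<in> A j" "inj_on f J0" "r (f ` J0) = card J0"
    using rado[OF fJ0 finA condA] by blast
  show "\<exists>X. X \<subseteq> \<Union>(E ` P) \<and> (\<forall>p\<in>P. card (X \<inter> E p) = c p) \<and> r X = card X"
  proof (intro exI conjI)
    show "f ` J0 \<subseteq> \<Union>(E ` P)" using f(1) by (force simp: J0_def A_def)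
    show "\<forall>p\<in>P. card (f ` J0 \<inter> E p) = c p"
    proof
      fix p assume p: "p \<in> P"
      have "f ` J0 \<inter> E p = f ` ({p} \<times> {..<c p})"
      proof
        show "f ` J0 \<inter> E p \<subseteq> f ` ({p} \<times> {..<c p})"
        proof
          fix y assume "y \<in> f ` J0 \<inter> E p"
          then obtain q k where qk: "(q, k) \<in> J0" "y = f (q, k)" "y \<in> E p" by auto
          then have "y \<in> E q" using f(1) by (auto simp: A_def)
          then have "q = p" using disj qk p by (auto simp: J0_def)
          then show "y \<in> f ` ({p} \<times> {..<c p})" using qk by (auto simp: J0_def)
        qed
        show "f ` ({p} \<times> {..<c p}) \<subseteq> f ` J0 \<inter> E p"
          using f(1) p by (auto simp: J0_def A_def)
      qed
      also have "card \<dots> = card ({p} \<times> {..<c p})"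
        using f(2) p by (intro card_image inj_on_subset[OF f(2)]) (auto simp: J0_def)
      also have "\<dots> = c p" by simp
      finally show "card (f ` J0 \<inter> E p) = c p" .
    qed
    show "r (f ` J0) = card (f ` J0)" using f(2,3) by (simp add: card_image)
  qed
qed

end



lemma rankf_dim: "rankf (\<lambda>Z. vs.dim ((f :: 'e \<Rightarrow> 'c \<Rightarrow> 'a::field) ` Z))"
proof
  fix X :: "'e set" assume "finite X"
  then show "vs.dim (f ` X) \<le> card X"
    using vs.dim_le_card'[of "f ` X"] card_image_le[of X f] by simp
next
  fix X Y :: "'e set" assume "X \<subseteq> Y" "finite Y"
  then show "vs.dim (f ` X) \<le> vs.dim (f ` Y)"
    by (intro vs.dim_subset_fin) auto
next
  fix X Y :: "'e set" assume f: "finite X" "finite Y"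
  have "vs.dim (f ` (X \<inter> Y)) \<le> vs.dim (f ` X \<inter> f ` Y)"
    using f by (intro vs.dim_subset_fin) auto
  moreover have "vs.dim (f ` X \<union> f ` Y) + vs.dim (f ` X \<inter> f ` Y) \<le> vs.dim (f ` X) + vs.dim (f ` Y)"
    using f by (intro vs.dim_submod) auto
  ultimately show "vs.dim (f ` (X \<union> Y)) + vs.dim (f ` (X \<inter> Y)) \<le> vs.dim (f ` X) + vs.dim (f ` Y)"
    by (simp add: image_Un)
qed

lemma r_split:
  fixes G :: "'r \<Rightarrow> 'c \<Rightarrow> 'a::field"
  assumes "finite T" "T' \<subseteq> T" "finite R"
  shows "vs.dim (case_sum (rowv G T) evec ` (Inl ` R \<union> Inr ` T')) = submatrix_rank G R (T - T') + card T'"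
proof -
  have "case_sum (rowv G T) evec ` (Inl ` R \<union> Inr ` T') = rowv G T ` R \<union> (evec ` T' :: ('c \<Rightarrow> 'a) set)"
    by (simp add: image_Un image_image)
  then show ?thesis using keyD[OF assms] by simp
qed



theorem mainTheorem2:
  fixes G :: "'r \<Rightarrow> 'c \<Rightarrow> 'a::field"
    and S :: "'r set" and T :: "'c set"
    and SS :: "nat \<Rightarrow> 'r set" and TT :: "nat \<Rightarrow> 'c set"
    and m n :: nat and s t :: "nat \<Rightarrow> nat"
  assumes "finite S" and "finite T"
    and "S = (\<Union>i\<in>{1..m}. SS i)" and "T = (\<Union>j\<in>{1..n}. TT j)"
    and "\<forall>i\<in>{1..m}. \<forall>i'\<in>{1..m}. i \<noteq> i' \<longrightarrow> SS i \<inter> SS i' = {}"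
    and "\<forall>j\<in>{1..n}. \<forall>j'\<in>{1..n}. j \<noteq> j' \<longrightarrow> TT j \<inter> TT j' = {}"
    and "\<forall>j\<in>{1..n}. t j \<le> card (TT j)"
  shows "(\<exists>ss tt. (\<forall>i\<in>{1..m}. ss i \<subseteq> SS i \<and> card (ss i) = s i)
              \<and> (\<forall>j\<in>{1..n}. tt j \<subseteq> TT j \<and> card (tt j) = t j)
              \<and> submatrix_rank G (\<Union>i\<in>{1..m}. ss i) (\<Union>j\<in>{1..n}. tt j) = (\<Sum>i=1..m. s i))
         \<longleftrightarrow>
         (\<forall>I\<subseteq>{1..m}. \<forall>K\<subseteq>{1..n}.
            int (submatrix_rank G (\<Union>i\<in>I. SS i) (\<Union>k\<in>K. TT k))
              \<ge> int (\<Sum>i\<in>I. s i) + int (\<Sum>k\<in>K. t k) - int (\<Sum>j=1..n. t j))"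
  (is "?L \<longleftrightarrow> ?R")
proof -
  note fS = assms(1) and fT = assms(2) and Sdef = assms(3) and Tdef = assms(4)
    and dS = assms(5) and dT = assms(6) and tle = assms(7)
  define v where "v = case_sum (rowv G T) (evec :: 'c \<Rightarrow> 'c \<Rightarrow> 'a)"
  define r where "r Z = vs.dim (v ` Z)" for Z :: "('r + 'c) set"
  interpret rankf r unfolding r_def by (rule rankf_dim)
  define P :: "(nat + nat) set" where "P = Inl ` {1..m} \<union> Inr ` {1..n}"
  define E :: "nat + nat \<Rightarrow> ('r + 'c) set" where "E = case_sum (\<lambda>i. Inl ` SS i) (\<lambda>j. Inr ` TT j)"
  define c where "c = case_sum s (\<lambda>j. card (TT j) - t j)"
  have SSsub: "\<And>i. i \<in> {1..m} \<Longrightarrow> SS i \<subseteq> S" using Sdef by blast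
  have TTsub: "\<And>j. j \<in> {1..n} \<Longrightarrow> TT j \<subseteq> T" using Tdef by blast
  have fSS: "\<And>i. i \<in> {1..m} \<Longrightarrow> finite (SS i)" using SSsub fS finite_subset by blast
  have fTT: "\<And>j. j \<in> {1..n} \<Longrightarrow> finite (TT j)" using TTsub fT finite_subset by blast
  have rX: "r (Inl ` R \<union> Inr ` T') = submatrix_rank G R (T - T') + card T'"
    if "finite R" "T' \<subseteq> T" for R T'
    unfolding r_def v_def using r_split[OF fT that(2) that(1)] by simp
  have fP: "finite P" by (simp add: P_def)
  have fE: "\<forall>p\<in>P. finite (E p)" using fSS fTT by (auto simp: P_def E_def)
  have dE: "\<forall>p\<in>P. \<forall>q\<in>P. p \<noteq> q \<longrightarrow> E p \<inter> E q = {}"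
  proof (intro ballI impI)
    fix p q assume pq: "p \<in> P" "q \<in> P" "p \<noteq> q"
    show "E p \<inter> E q = {}"
    proof (cases p; cases q)
      fix i i' assume h: "p = Inl i" "q = Inl i'"
      then have "SS i \<inter> SS i' = {}" using pq dS by (auto simp: P_def)
      then show ?thesis using h by (auto simp: E_def)
    next
      fix i i' assume h: "p = Inr i" "q = Inr i'"
      then have "TT i \<inter> TT i' = {}" using pq dT by (auto simp: P_def)
      then show ?thesis using h by (auto simp: E_def)
    qed (auto simp: E_def)
  qed
  have UEP: "\<Union>(E ` P) = Inl ` S \<union> Inr ` T"
    using Sdef Tdef by (auto simp: P_def E_def)
  have caps: "(\<exists>X. X \<subseteq> \<Union>(E ` P) \<and> (\<forall>p\<in>P. card (X \<inter> E p) = c p) \<and> r X = card X)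
     \<longleftrightarrow> (\<forall>Q\<subseteq>P. sum c Q \<le> r (\<Union>(E ` Q)))"
    by (rule caps_iff[OF fP fE dE])
  have L1: "?L \<longleftrightarrow> (\<exists>X. X \<subseteq> \<Union>(E ` P) \<and> (\<forall>p\<in>P. card (X \<inter> E p) = c p) \<and> r X = card X)"
  proof
    assume ?L
    then obtain ss tt where ss: "\<forall>i\<in>{1..m}. ss i \<subseteq> SS i \<and> card (ss i) = s i"
      and tt: "\<forall>j\<in>{1..n}. tt j \<subseteq> TT j \<and> card (tt j) = t j"
      and rk: "submatrix_rank G (\<Union>i\<in>{1..m}. ss i) (\<Union>j\<in>{1..n}. tt j) = (\<Sum>i=1..m. s i)"
      by blast
    define R where "R = (\<Union>i\<in>{1..m}. ss i)"
    define C where "C = (\<Union>j\<in>{1..n}. tt j)"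
    define X where "X = Inl ` R \<union> Inr ` (T - C)"
    have RS: "R \<subseteq> S" using ss SSsub by (force simp: R_def)
    have CT: "C \<subseteq> T" using tt TTsub by (force simp: C_def)
    have fR: "finite R" using RS fS finite_subset by blast
    have fss: "\<And>i. i\<in>{1..m} \<Longrightarrow> finite (ss i)" using ss fSS finite_subset by blast
    have ftt: "\<And>j. j\<in>{1..n} \<Longrightarrow> finite (tt j)" using tt fTT finite_subset by blast
    have dss: "\<forall>i\<in>{1..m}. \<forall>j\<in>{1..m}. i \<noteq> j \<longrightarrow> ss i \<inter> ss j = {}"
    proof (intro ballI impI)
      fix i j assume "i \<in> {1..m}" "j \<in> {1..m}" "i \<noteq> j"
      then have "SS i \<inter> SS j = {}" "ss i \<subseteq> SS i" "ss j \<subseteq> SS j" using dS ss by auto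
      then show "ss i \<inter> ss j = {}" by blast
    qed
    have cR: "card R = (\<Sum>i=1..m. s i)"
    proof -
      have "card R = (\<Sum>i\<in>{1..m}. card (ss i))" unfolding R_def
        using fss dss by (intro card_UN_disjoint) auto
      also have "\<dots> = (\<Sum>i=1..m. s i)" using ss by simp
      finally show ?thesis .
    qed
    show "\<exists>X. X \<subseteq> \<Union>(E ` P) \<and> (\<forall>p\<in>P. card (X \<inter> E p) = c p) \<and> r X = card X"
    proof (intro exI conjI)
      show "X \<subseteq> \<Union>(E ` P)" unfolding UEP X_def using RS by blast
      show "\<forall>p\<in>P. card (X \<inter> E p) = c p"
      proof
        fix p assume "p \<in> P"
        then consider (l) i where "i \<in> {1..m}" "p = Inl i" | (r) j where "j\<in>{1..n}" "p = Inr j"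
          by (auto simp: P_def)
        then show "card (X \<inter> E p) = c p"
        proof cases
          case l
          have "R \<inter> SS i = ss i"
          proof
            show "ss i \<subseteq> R \<inter> SS i" using l ss unfolding R_def by blast
            show "R \<inter> SS i \<subseteq> ss i"
            proof
              fix x assume "x \<in> R \<inter> SS i"
              then obtain i' where i': "i' \<in> {1..m}" "x \<in> ss i'" "x \<in> SS i" unfolding R_def by blast
              then have "x \<in> SS i'" using ss by blast
              then have "i' = i" using i' dS l by blast
              then show "x \<in> ss i" using i' by simp
            qed
          qed
          moreover have "X \<inter> E p = Inl ` (R \<inter> SS i)" using l by (auto simp: X_def E_def)
          ultimately show ?thesis using l ss by (simp add: card_image c_def)
        next
          case r
          have "(T - C) \<inter> TT j = TT j - tt j"
          proof
            show "(T - C) \<inter> TT j \<subseteq> TT j - tt j" using r unfolding C_def by blast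
            show "TT j - tt j \<subseteq> (T - C) \<inter> TT j"
            proof
              fix x assume x: "x \<in> TT j - tt j"
              have "x \<notin> C"
              proof
                assume "x \<in> C"
                then obtain j' where j': "j' \<in> {1..n}" "x \<in> tt j'" unfolding C_def by blast
                then have "x \<in> TT j'" using tt by blast
                then have "j' = j" using j' x dT r by blast
                then show False using j' x by simp
              qed
              then show "x \<in> (T - C) \<inter> TT j" using x TTsub[OF r(1)] by blast
            qed
          qed
          moreover have "X \<inter> E p = Inr ` ((T - C) \<inter> TT j)" using r by (auto simp: X_def E_def)
          moreover have "card (TT j - tt j) = card (TT j) - card (tt j)"
            using ftt[OF r(1)] tt r by (intro card_Diff_subset) auto
          ultimately show ?thesis using r tt by (simp add: card_image c_def)
        qed
      qed
      have "r X = submatrix_rank G R (T - (T - C)) + card (T - C)"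
        unfolding X_def by (rule rX[OF fR]) blast
      also have "T - (T - C) = C" using CT by blast
      finally have "r X = (\<Sum>i=1..m. s i) + card (T - C)" using rk by (simp add: R_def C_def)
      moreover have "card X = card R + card (T - C)"
      proof -
        have "card X = card (Inl ` R :: ('r + 'c) set) + card (Inr ` (T - C) :: ('r + 'c) set)"
          unfolding X_def using fR fT by (intro card_Un_disjoint) auto
        then show ?thesis by (simp add: card_image)
      qed
      ultimately show "r X = card X" using cR by simp
    qed
  next
    assume "\<exists>X. X \<subseteq> \<Union>(E ` P) \<and> (\<forall>p\<in>P. card (X \<inter> E p) = c p) \<and> r X = card X"
    then obtain X where X: "X \<subseteq> \<Union>(E ` P)" "\<forall>p\<in>P. card (X \<inter> E p) = c p" "r X = card X"
      by blast
    define R where "R = {i. Inl i \<in> X}"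
    define T' where "T' = {j. Inr j \<in> X}"
    have Xeq: "X = Inl ` R \<union> Inr ` T'"
    proof (rule set_eqI)
      fix x show "x \<in> X \<longleftrightarrow> x \<in> Inl ` R \<union> Inr ` T'" by (cases x) (auto simp: R_def T'_def)
    qed
    have RS: "R \<subseteq> S" using X(1) UEP by (auto simp: R_def)
    have T'T: "T' \<subseteq> T" using X(1) UEP by (auto simp: T'_def)
    have fR: "finite R" using RS fS finite_subset by blast
    have fT': "finite T'" using T'T fT finite_subset by blast
    define ss where "ss i = R \<inter> SS i" for i
    define tt where "tt j = TT j - T'" for j
    have css: "card (ss i) = s i" if i: "i \<in> {1..m}" for i
    proof -
      have "X \<inter> E (Inl i) = Inl ` (R \<inter> SS i)" using Xeq by (auto simp: E_def)
      moreover have "Inl i \<in> P" using i by (simp add: P_def)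
      ultimately show ?thesis using X(2) by (force simp: card_image c_def ss_def)
    qed
    have ctt: "card (tt j) = t j" if j: "j \<in> {1..n}" for j
    proof -
      have "X \<inter> E (Inr j) = Inr ` (TT j \<inter> T')" using Xeq by (auto simp: E_def)
      moreover have "Inr j \<in> P" using j by (simp add: P_def)
      ultimately have "card (TT j \<inter> T') = card (TT j) - t j" using X(2) by (force simp: card_image c_def)
      moreover have "card (TT j - T') = card (TT j) - card (TT j \<inter> T')"
        using fT' by (intro card_Diff_subset_Int) auto
      ultimately show ?thesis using tle j by (simp add: tt_def)
    qed
    have UR: "(\<Union>i\<in>{1..m}. ss i) = R" using RS Sdef by (auto simp: ss_def)
    have UC: "(\<Union>j\<in>{1..n}. tt j) = T - T'" using Tdef by (auto simp: tt_def)
    have dss: "\<forall>i\<in>{1..m}. \<forall>j\<in>{1..m}. i \<noteq> j \<longrightarrow> ss i \<inter> ss j = {}"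
      using dS by (auto simp: ss_def)
    have cR: "card R = (\<Sum>i=1..m. s i)"
    proof -
      have "card R = (\<Sum>i\<in>{1..m}. card (ss i))" unfolding UR[symmetric]
        using fR dss by (intro card_UN_disjoint) (auto simp: ss_def)
      also have "\<dots> = (\<Sum>i=1..m. s i)" using css by simp
      finally show ?thesis .
    qed
    have "r X = submatrix_rank G R (T - T') + card T'" unfolding Xeq by (rule rX[OF fR T'T])
    moreover have "card X = card R + card T'"
    proof -
      have "card X = card (Inl ` R :: ('r + 'c) set) + card (Inr ` T' :: ('r + 'c) set)"
        unfolding Xeq using fR fT' by (intro card_Un_disjoint) auto
      then show ?thesis by (simp add: card_image)
    qed
    ultimately have "submatrix_rank G R (T - T') = card R" using X(3) by simp
    then show ?L using css ctt UR UC cR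
      by (intro exI[of _ ss] exI[of _ tt]) (auto simp: ss_def tt_def)
  qed
  have HQ1: "int (r (\<Union>(E ` (Inl ` I \<union> Inr ` L)))) =
      int (submatrix_rank G (\<Union>i\<in>I. SS i) (\<Union>k\<in>{1..n} - L. TT k)) + int (\<Sum>j\<in>L. card (TT j))"
    if IL: "I \<subseteq> {1..m}" "L \<subseteq> {1..n}" for I L
  proof -
    have eq: "\<Union>(E ` (Inl ` I \<union> Inr ` L)) = Inl ` (\<Union>i\<in>I. SS i) \<union> Inr ` (\<Union>j\<in>L. TT j)"
      by (auto simp: E_def)
    have f1: "finite (\<Union>i\<in>I. SS i)" using IL fSS by (intro finite_UN_I) (auto intro: finite_subset)
    have s2: "(\<Union>j\<in>L. TT j) \<subseteq> T" using IL TTsub by blast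
    have TL: "T - (\<Union>j\<in>L. TT j) = (\<Union>k\<in>{1..n} - L. TT k)"
    proof
      show "T - (\<Union>j\<in>L. TT j) \<subseteq> (\<Union>k\<in>{1..n} - L. TT k)" using Tdef by blast
      show "(\<Union>k\<in>{1..n} - L. TT k) \<subseteq> T - (\<Union>j\<in>L. TT j)"
      proof
        fix x assume "x \<in> (\<Union>k\<in>{1..n} - L. TT k)"
        then obtain k where k: "k \<in> {1..n}" "k \<notin> L" "x \<in> TT k" by blast
        have "x \<notin> TT j" if "j \<in> L" for j
        proof
          assume "x \<in> TT j"
          then have "TT k \<inter> TT j \<noteq> {}" using k by blast
          moreover have "k \<noteq> j" using k that by blast
          ultimately show False using dT k that IL by blast
        qed
        then show "x \<in> T - (\<Union>j\<in>L. TT j)" using k TTsub by blast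
      qed
    qed
    have cL: "card (\<Union>j\<in>L. TT j) = (\<Sum>j\<in>L. card (TT j))"
    proof (rule card_UN_disjoint)
      show "finite L" using IL finite_subset by blast
      show "\<forall>j\<in>L. finite (TT j)" using IL fTT by blast
      show "\<forall>j\<in>L. \<forall>j'\<in>L. j \<noteq> j' \<longrightarrow> TT j \<inter> TT j' = {}" using IL dT by blast
    qed
    show ?thesis unfolding eq rX[OF f1 s2] TL cL by simp
  qed
  have HQ2: "int (sum c (Inl ` I \<union> Inr ` L)) =
      int (\<Sum>i\<in>I. s i) + int (\<Sum>j\<in>L. card (TT j)) - int (\<Sum>j\<in>L. t j)"
    if IL: "I \<subseteq> {1..m}" "L \<subseteq> {1..n}" for I L
  proof -
    have fI: "finite I" "finite L" using IL finite_subset by blast+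
    have "sum c (Inl ` I \<union> Inr ` L) = sum c (Inl ` I) + sum c (Inr ` L)"
      using fI by (intro sum.union_disjoint) auto
    also have "sum c (Inl ` I) = (\<Sum>i\<in>I. s i)" by (simp add: sum.reindex c_def)
    also have "sum c (Inr ` L) = (\<Sum>j\<in>L. card (TT j) - t j)" by (simp add: sum.reindex c_def)
    finally have "int (sum c (Inl ` I \<union> Inr ` L)) = int (\<Sum>i\<in>I. s i) + (\<Sum>j\<in>L. int (card (TT j) - t j))"
      by simp
    also have "(\<Sum>j\<in>L. int (card (TT j) - t j)) = (\<Sum>j\<in>L. int (card (TT j)) - int (t j))"
      using IL tle by (intro sum.cong) auto
    also have "\<dots> = int (\<Sum>j\<in>L. card (TT j)) - int (\<Sum>j\<in>L. t j)"
      by (simp add: sum_subtractf)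
    finally show ?thesis by simp
  qed
  have sumT: "int (\<Sum>j=1..n. t j) = int (\<Sum>j\<in>L. t j) + int (\<Sum>j\<in>{1..n} - L. t j)"
    if "L \<subseteq> {1..n}" for L
    using sum.subset_diff[OF that, of t] by simp
  have R1: "?R \<longleftrightarrow> (\<forall>Q\<subseteq>P. sum c Q \<le> r (\<Union>(E ` Q)))"
  proof
    assume R: ?R
    show "\<forall>Q\<subseteq>P. sum c Q \<le> r (\<Union>(E ` Q))"
    proof (intro allI impI)
      fix Q assume Q: "Q \<subseteq> P"
      define I where "I = {i. Inl i \<in> Q}"
      define L where "L = {j. Inr j \<in> Q}"
      have I: "I \<subseteq> {1..m}" using Q by (auto simp: I_def P_def)
      have L: "L \<subseteq> {1..n}" using Q by (auto simp: L_def P_def)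
      have Qeq: "Q = Inl ` I \<union> Inr ` L"
      proof (rule set_eqI)
        fix x show "x \<in> Q \<longleftrightarrow> x \<in> Inl ` I \<union> Inr ` L" by (cases x) (auto simp: I_def L_def)
      qed
      have K: "{1..n} - L \<subseteq> {1..n}" by blast
      have "int (submatrix_rank G (\<Union>i\<in>I. SS i) (\<Union>k\<in>{1..n} - L. TT k))
              \<ge> int (\<Sum>i\<in>I. s i) + int (\<Sum>k\<in>{1..n} - L. t k) - int (\<Sum>j=1..n. t j)"
        using R I K by blast
      then have "int (sum c Q) \<le> int (r (\<Union>(E ` Q)))"
        unfolding Qeq using HQ1[OF I L] HQ2[OF I L] sumT[OF L] by linarith
      then show "sum c Q \<le> r (\<Union>(E ` Q))" by (metis of_nat_le_iff)
    qed
  next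
    assume C: "\<forall>Q\<subseteq>P. sum c Q \<le> r (\<Union>(E ` Q))"
    show ?R
    proof (intro allI impI)
      fix I K assume I: "I \<subseteq> {1..m}" and K: "K \<subseteq> {1..n}"
      define L where "L = {1..n} - K"
      have L: "L \<subseteq> {1..n}" by (simp add: L_def)
      have KL: "{1..n} - L = K" using K by (auto simp: L_def)
      have "Inl ` I \<union> Inr ` L \<subseteq> P" using I L by (auto simp: P_def)
      then have "sum c (Inl ` I \<union> Inr ` L) \<le> r (\<Union>(E ` (Inl ` I \<union> Inr ` L)))" using C by blast
      then have "int (sum c (Inl ` I \<union> Inr ` L)) \<le> int (r (\<Union>(E ` (Inl ` I \<union> Inr ` L))))" by (metis of_nat_le_iff)
      then show "int (submatrix_rank G (\<Union>i\<in>I. SS i) (\<Union>k\<in>K. TT k))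
              \<ge> int (\<Sum>i\<in>I. s i) + int (\<Sum>k\<in>K. t k) - int (\<Sum>j=1..n. t j)"
        using HQ1[OF I L] HQ2[OF I L] sumT[OF L] unfolding KL by linarith
    qed
  qed
  show ?thesis using L1 R1 caps by blast
qed


end
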